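(* Let $d\ge1$, $\alpha\in(0,1]$, $\beta\ge\alpha$, $C<\infty$, and let $\pi$ be a probability measure on $\mathbb R^d$ with $\int_{\mathbb R^d}|x|_\infty^\beta\,d\pi(x)<\infty$. Let $W$ be a graphon over $(\mathbb R^d,\pi)$ with $\|W\|_1=1$ satisfying $|W(x,y)-W(x',y)|\le C|x-x'|_\infty^\alpha$ for all $x,x',y\in\mathbb R^d$. If $1\le p<\beta/\alpha$ and $\kappa\le1/2$, then \[ \varepsilon^{(p)}_{\ge\kappa}(W)=O(\kappa^{\alpha'})\qquad\text{and}\qquad\mathrm{tail}^{(p)}_\rho(W)=O(\rho^{\beta'}), \] where $\beta'=\frac{\beta}{p\alpha}-1$ and $\alpha'=\frac{\alpha}{p\alpha+d}\cdot\frac{\beta'}{1+\beta'}$, and the implicit constants depend only on $\pi$, $\alpha$, $\beta$, $p$ and $C$.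
   Context: A graphon over $(\mathbb R^d,\pi)$ (Borel $\sigma$-algebra) is a measurable symmetric $W:\mathbb R^d\times\mathbb R^d\to[0,\infty)$ with $\|W\|_1<\infty$, $\|W\|_p^p=\int|W|^p\,d\pi\,d\pi$; $|\cdot|_\infty$ is the max norm. $\mathrm{tail}^{(p)}_\rho(W)=\|W-\min\{W,\rho^{-1}\}\|_p$ for $\rho>0$. A block model $(\mathbf p,B)$ is the graphon on $[k]$ with measure $\mathbf p$ and $W(i,j)=B_{ij}$. $\delta_p(W,W')=\inf_\nu(\int|W(x,y)-W'(x',y')|^pd\nu(x,x')d\nu(y,y'))^{1/p}$ over couplings $\nu$ of the underlying measures. $\varepsilon^{(p)}_{\ge\kappa}(W)=\inf\{\delta_p(W,W'):W'=(\mathbf p,B)\text{ block model},\min_ip_i\ge\kappa\}$. *)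

theory Defs
  imports "HOL-Probability.Probability"
begin

definition enn_root :: "real \<Rightarrow> ennreal \<Rightarrow> ennreal" where
  "enn_root p x = (if x = \<infinity> then \<infinity> else ennreal (enn2real x powr (1 / p)))"

definition graphon :: "'a measure \<Rightarrow> ('a \<Rightarrow> 'a \<Rightarrow> real) \<Rightarrow> bool" where
  "graphon mu W \<longleftrightarrow> (\<lambda>z. W (fst z) (snd z)) \<in> borel_measurable (mu \<Otimes>\<^sub>M mu)
     \<and> (\<forall>x y. W x y = W y x) \<and> (\<forall>x y. 0 \<le> W x y)
     \<and> (\<integral>\<^sup>+ z. ennreal \<bar>W (fst z) (snd z)\<bar> \<partial>(mu \<Otimes>\<^sub>M mu)) < \<infinity>"

definition graphon_norm :: "real \<Rightarrow> 'a measure \<Rightarrow> ('a \<Rightarrow> 'a \<Rightarrow> real) \<Rightarrow> ennreal" where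
  "graphon_norm p mu W =
     enn_root p (\<integral>\<^sup>+ z. ennreal (\<bar>W (fst z) (snd z)\<bar> powr p) \<partial>(mu \<Otimes>\<^sub>M mu))"

definition graphon_tail :: "real \<Rightarrow> real \<Rightarrow> 'a measure \<Rightarrow> ('a \<Rightarrow> 'a \<Rightarrow> real) \<Rightarrow> ennreal" where
  "graphon_tail p \<rho> mu W = graphon_norm p mu (\<lambda>x y. W x y - min (W x y) (1 / \<rho>))"

definition coupling :: "'a measure \<Rightarrow> 'b measure \<Rightarrow> ('a \<times> 'b) measure \<Rightarrow> bool" where
  "coupling mu1 mu2 nu \<longleftrightarrow> sets nu = sets (mu1 \<Otimes>\<^sub>M mu2)
     \<and> (\<forall>A\<in>sets mu1. emeasure nu (A \<times> space mu2) = emeasure mu1 A)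
     \<and> (\<forall>B\<in>sets mu2. emeasure nu (space mu1 \<times> B) = emeasure mu2 B)"

definition delta_p :: "real \<Rightarrow> 'a measure \<Rightarrow> ('a \<Rightarrow> 'a \<Rightarrow> real) \<Rightarrow> 'b measure \<Rightarrow> ('b \<Rightarrow> 'b \<Rightarrow> real) \<Rightarrow> ennreal" where
  "delta_p p mu1 W mu2 W' = enn_root p
     (INF nu \<in> {nu. coupling mu1 mu2 nu}.
        \<integral>\<^sup>+ z. ennreal (\<bar>W (fst (fst z)) (fst (snd z)) - W' (snd (fst z)) (snd (snd z))\<bar> powr p) \<partial>(nu \<Otimes>\<^sub>M nu))"

definition block_measure :: "nat \<Rightarrow> (nat \<Rightarrow> real) \<Rightarrow> nat measure" where
  "block_measure k q = point_measure {..<k} (\<lambda>i. ennreal (q i))"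

text \<open>Block models \<open>(\<bold>p, B)\<close> on k classes, with \<open>min_i p_i \<ge> \<kappa>\<close>: \<open>\<bold>p\<close> a probability vector,
  B a symmetric nonnegative matrix (so that the block model is a graphon).\<close>
definition block_model_ge :: "real \<Rightarrow> nat \<Rightarrow> (nat \<Rightarrow> real) \<Rightarrow> (nat \<Rightarrow> nat \<Rightarrow> real) \<Rightarrow> bool" where
  "block_model_ge \<kappa> k q B \<longleftrightarrow> k \<ge> 1 \<and> (\<forall>i<k. q i \<ge> \<kappa> \<and> q i \<ge> 0) \<and> (\<Sum>i<k. q i) = 1
     \<and> (\<forall>i<k. \<forall>j<k. B i j = B j i \<and> 0 \<le> B i j)"

definition eps_block :: "real \<Rightarrow> real \<Rightarrow> 'a measure \<Rightarrow> ('a \<Rightarrow> 'a \<Rightarrow> real) \<Rightarrow> ennreal" where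
  "eps_block p \<kappa> mu W = (INF (k, q, B) \<in> {(k, q, B). block_model_ge \<kappa> k q B}.
      delta_p p mu W (block_measure k q) B)"

end

theory Submission
  imports Defs
begin

lemma powr_subadd:
  fixes a b \<alpha> :: real
  assumes "0 \<le> a" "0 \<le> b" "0 < \<alpha>" "\<alpha> \<le> 1"
  shows "(a + b) powr \<alpha> \<le> a powr \<alpha> + b powr \<alpha>"
proof (cases "a + b = 0")
  case True then show ?thesis using assms by auto
next
  case False
  hence s: "a + b > 0" using assms by auto
  have 1: "a / (a+b) \<le> (a/(a+b)) powr \<alpha>"
    using powr_mono'[of \<alpha> 1 "a/(a+b)"] assms s by auto
  have 2: "b / (a+b) \<le> (b/(a+b)) powr \<alpha>"
    using powr_mono'[of \<alpha> 1 "b/(a+b)"] assms s by auto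
  have "1 = a/(a+b) + b/(a+b)" using s by (simp add: add_divide_distrib[symmetric])
  also have "\<dots> \<le> (a/(a+b)) powr \<alpha> + (b/(a+b)) powr \<alpha>" using 1 2 by simp
  also have "\<dots> = (a powr \<alpha> + b powr \<alpha>) / (a+b) powr \<alpha>"
    using assms s by (simp add: powr_divide add_divide_distrib)
  finally show ?thesis using s by (simp add: field_simps)
qed

lemma powr_sum2:
  fixes a b q :: real
  assumes "0 \<le> a" "0 \<le> b" "0 \<le> q"
  shows "(a + b) powr q \<le> 2 powr q * (a powr q + b powr q)"
proof -
  have "(a + b) powr q \<le> (2 * max a b) powr q"
    by (rule powr_mono2) (use assms in auto)
  also have "\<dots> = 2 powr q * max a b powr q" using assms by (simp add: powr_mult)
  also have "max a b powr q \<le> a powr q + b powr q" by (simp add: max_def)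
  finally show ?thesis by (simp add: mult_left_mono)
qed

lemma powr_sum3:
  fixes a b c q :: real
  assumes "0 \<le> a" "0 \<le> b" "0 \<le> c" "0 \<le> q"
  shows "(a + b + c) powr q \<le> 3 powr q * (a powr q + b powr q + c powr q)"
proof -
  have "(a + b + c) powr q \<le> (3 * max a (max b c)) powr q"
    by (rule powr_mono2) (use assms in auto)
  also have "\<dots> = 3 powr q * max a (max b c) powr q" using assms by (simp add: powr_mult)
  also have "max a (max b c) powr q \<le> a powr q + b powr q + c powr q" by (simp add: max_def)
  finally show ?thesis by (simp add: mult_left_mono)
qed

lemma powr_le_1_plus:
  fixes t \<gamma> \<beta> :: real
  assumes "0 \<le> t" "0 \<le> \<gamma>" "\<gamma> \<le> \<beta>"
  shows "t powr \<gamma> \<le> 1 + t powr \<beta>"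
proof (cases "t \<le> 1")
  case True
  hence "t powr \<gamma> \<le> 1 powr \<gamma>" using assms by (intro powr_mono2) auto
  hence A: "t powr \<gamma> \<le> 1" by simp
  have B: "0 \<le> t powr \<beta>" by simp
  show ?thesis using A B by linarith
next
  case False
  hence "t powr \<gamma> \<le> t powr \<beta>" using assms by (intro powr_mono) auto
  then show ?thesis by simp
qed


lemma enn_root_mono:
  assumes "x \<le> y" "0 < p"
  shows "enn_root p x \<le> enn_root p y"
proof (cases "y = \<infinity>")
  case True then show ?thesis by (simp add: enn_root_def)
next
  case False
  hence yt: "y < \<infinity>" by (simp add: less_top)
  hence xt: "x < \<infinity>" using assms(1) by (rule order.strict_trans1[rotated])
  have "enn2real x \<le> enn2real y" by (rule enn2real_mono[OF assms(1)]) (use yt in simp)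
  hence "enn2real x powr (1/p) \<le> enn2real y powr (1/p)"
    using assms by (intro powr_mono2) auto
  hence "ennreal (enn2real x powr (1/p)) \<le> ennreal (enn2real y powr (1/p))" by (rule ennreal_leI)
  moreover have "x \<noteq> \<infinity>" using xt by simp
  ultimately show ?thesis using False unfolding enn_root_def by simp
qed

lemma space_bm: "space (block_measure k q) = {..<k}"
  by (simp add: block_measure_def point_measure_def)
lemma sets_bm: "sets (block_measure k q) = Pow {..<k}"
  by (simp add: block_measure_def point_measure_def)

lemma nn_int_fst:
  assumes "prob_space M" "f \<in> borel_measurable M"
  shows "(\<integral>\<^sup>+ z. f (fst z) \<partial>(M \<Otimes>\<^sub>M M)) = (\<integral>\<^sup>+ x. f x \<partial>M)"
proof -
  interpret prob_space M by fact
  interpret pair_sigma_finite M M ..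
  have m: "(\<lambda>z. f (fst z)) \<in> borel_measurable (M \<Otimes>\<^sub>M M)" using assms(2) by measurable
  have "(\<integral>\<^sup>+ z. f (fst z) \<partial>(M \<Otimes>\<^sub>M M)) = (\<integral>\<^sup>+ x. \<integral>\<^sup>+ y. f (fst (x,y)) \<partial>M \<partial>M)"
    using sigma_finite_measure.nn_integral_fst[OF prob_space_imp_sigma_finite[OF assms(1)] m] by simp
  also have "\<dots> = (\<integral>\<^sup>+ x. f x \<partial>M)" by (simp add: emeasure_space_1)
  finally show ?thesis .
qed

lemma nn_int_snd:
  assumes "prob_space M" "f \<in> borel_measurable M"
  shows "(\<integral>\<^sup>+ z. f (snd z) \<partial>(M \<Otimes>\<^sub>M M)) = (\<integral>\<^sup>+ x. f x \<partial>M)"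
proof -
  interpret prob_space M by fact
  interpret pair_sigma_finite M M ..
  have m: "(\<lambda>z. f (snd z)) \<in> borel_measurable (M \<Otimes>\<^sub>M M)" using assms(2) by measurable
  have "(\<integral>\<^sup>+ z. f (snd z) \<partial>(M \<Otimes>\<^sub>M M)) = (\<integral>\<^sup>+ y. \<integral>\<^sup>+ x. f (snd (x,y)) \<partial>M \<partial>M)"
    using nn_integral_snd[OF m] by simp
  also have "\<dots> = (\<integral>\<^sup>+ x. f x \<partial>M)" by (simp add: emeasure_space_1)
  finally show ?thesis .
qed


lemma infnorm_borel[measurable]: "(infnorm :: 'a::euclidean_space \<Rightarrow> real) \<in> borel_measurable borel"
  using borel_measurable_continuous_onI[OF continuous_on_infnorm[OF continuous_on_id]] by (simp add: id_def)

lemma pt_test: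
  fixes W :: "'a::euclidean_space \<Rightarrow> 'a \<Rightarrow> real"
  assumes H: "\<forall>x x' y. \<bar>W x y - W x' y\<bar> \<le> C * infnorm (x - x') powr \<alpha>"
    and sym: "\<And>a b. W a b = W b a" and C: "0 \<le> C" and p: "1 \<le> p"
  shows "\<bar>W x y - W (r (f x)) (r (f y))\<bar> powr p \<le> 2 powr p * C powr p * (infnorm (x - r (f x)) powr (\<alpha>*p) + infnorm (y - r (f y)) powr (\<alpha>*p))"
  proof -
    define Dx where "Dx = infnorm (x - r (f x)) powr \<alpha>"
    define Dy where "Dy = infnorm (y - r (f y)) powr \<alpha>"
    have 1: "\<bar>W x y - W (r (f x)) y\<bar> \<le> C * Dx" unfolding Dx_def by (rule H[rule_format])
    have "\<bar>W y (r (f x)) - W (r (f y)) (r (f x))\<bar> \<le> C * Dy" unfolding Dy_def by (rule H[rule_format])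
    moreover have "W y (r (f x)) = W (r (f x)) y" "W (r (f y)) (r (f x)) = W (r (f x)) (r (f y))"
      by (rule sym)+
    ultimately have 2: "\<bar>W (r (f x)) y - W (r (f x)) (r (f y))\<bar> \<le> C * Dy" by simp
    have "\<bar>W x y - W (r (f x)) (r (f y))\<bar> \<le> C * Dx + C * Dy" using 1 2 by linarith
    hence "\<bar>W x y - W (r (f x)) (r (f y))\<bar> powr p \<le> (C * Dx + C * Dy) powr p"
      using p by (intro powr_mono2) auto
    also have "\<dots> \<le> 2 powr p * ((C * Dx) powr p + (C * Dy) powr p)"
      using C p by (intro powr_sum2) (auto simp: Dx_def Dy_def)
    also have "(C * Dx) powr p = C powr p * infnorm (x - r (f x)) powr (\<alpha>*p)"
      using C by (simp add: powr_mult Dx_def powr_powr)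
    also have "(C * Dy) powr p = C powr p * infnorm (y - r (f y)) powr (\<alpha>*p)"
      using C by (simp add: powr_mult Dy_def powr_powr)
    finally show ?thesis by (simp only: distrib_left mult.assoc)
  qed

lemma eps_from_partition:
  fixes M :: "'a::euclidean_space measure" and W :: "'a \<Rightarrow> 'a \<Rightarrow> real"
    and f :: "'a \<Rightarrow> nat" and r :: "nat \<Rightarrow> 'a"
  assumes M: "prob_space M" and Mb: "sets M = sets borel" and G: "graphon M W"
    and H: "\<forall>x x' y. \<bar>W x y - W x' y\<bar> \<le> C * infnorm (x - x') powr \<alpha>"
    and C: "0 \<le> C" and p: "1 \<le> p"
    and k: "1 \<le> k" and f: "f \<in> M \<rightarrow>\<^sub>M count_space {..<k}"
    and mass: "\<forall>i<k. \<kappa> \<le> measure M (f -` {i} \<inter> space M)"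
  shows "eps_block p \<kappa> M W \<le> enn_root p (ennreal (2 powr p * C powr p * 2)
           * (\<integral>\<^sup>+ x. ennreal (infnorm (x - r (f x)) powr (\<alpha>*p)) \<partial>M))"
proof -
  interpret prob_space M by fact
  define q where "q i = measure M (f -` {i} \<inter> space M)" for i
  define B where "B i j = W (r i) (r j)" for i j
  define Bm where "Bm = block_measure k q"
  define \<phi> where "\<phi> x = (x, f x)" for x
  define nu where "nu = distr M (M \<Otimes>\<^sub>M Bm) \<phi>"
  have sBm: "sets Bm = sets (count_space {..<k})" by (simp add: Bm_def sets_bm)
  have spBm: "space Bm = {..<k}" by (simp add: Bm_def space_bm)
  have fB: "f \<in> M \<rightarrow>\<^sub>M Bm" using f measurable_cong_sets[OF refl sBm, of M] by simp
  have phi: "\<phi> \<in> M \<rightarrow>\<^sub>M M \<Otimes>\<^sub>M Bm" unfolding \<phi>_def using fB by measurable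
  have fs: "\<And>x. x \<in> space M \<Longrightarrow> f x < k" using measurable_space[OF f] by auto
  have fpre: "f -` {i} \<inter> space M \<in> sets M" if "i < k" for i
    using measurable_sets[OF f, of "{i}"] that by auto
  have sumq: "(\<Sum>i\<in>S. ennreal (q i)) = emeasure M (f -` S \<inter> space M)" if S: "S \<subseteq> {..<k}" for S
  proof -
    have fin: "finite S" using S finite_subset by blast
    have "(\<Sum>i\<in>S. ennreal (q i)) = (\<Sum>i\<in>S. emeasure M (f -` {i} \<inter> space M))"
      by (simp add: q_def emeasure_eq_measure)
    also have "\<dots> = emeasure M (\<Union>i\<in>S. f -` {i} \<inter> space M)"
      by (rule sum_emeasure) (use fpre S fin in \<open>auto simp: disjoint_family_on_def\<close>)
    also have "(\<Union>i\<in>S. f -` {i} \<inter> space M) = f -` S \<inter> space M" by auto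
    finally show ?thesis .
  qed
  have q0: "\<And>i. 0 \<le> q i" by (simp add: q_def)
  have q1: "(\<Sum>i<k. q i) = 1"
  proof -
    have "ennreal (\<Sum>i<k. q i) = (\<Sum>i<k. ennreal (q i))" using q0 by (simp add: sum_ennreal)
    also have "\<dots> = emeasure M (f -` {..<k} \<inter> space M)" by (rule sumq) simp
    also have "f -` {..<k} \<inter> space M = space M" using fs by auto
    finally show ?thesis using emeasure_space_1 q0 by (simp add: sum_nonneg)
  qed
  have bm: "block_model_ge \<kappa> k q B"
    unfolding block_model_ge_def using k mass q0 q1 G
    by (auto simp: q_def B_def graphon_def)
  have le1: "eps_block p \<kappa> M W \<le> delta_p p M W Bm B"
    unfolding eps_block_def Bm_def
    by (rule INF_lower2[of "(k, q, B)"]) (use bm in auto)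
  have cpl: "coupling M Bm nu"
    unfolding coupling_def
  proof (intro conjI ballI)
    show "sets nu = sets (M \<Otimes>\<^sub>M Bm)" by (simp add: nu_def)
  next
    fix A assume A: "A \<in> sets M"
    have "emeasure nu (A \<times> space Bm) = emeasure M (\<phi> -` (A \<times> space Bm) \<inter> space M)"
      unfolding nu_def using A by (intro emeasure_distr[OF phi]) auto
    also have "\<phi> -` (A \<times> space Bm) \<inter> space M = A"
      using sets.sets_into_space[OF A] fs by (auto simp: \<phi>_def spBm)
    finally show "emeasure nu (A \<times> space Bm) = emeasure M A" .
  next
    fix S assume S: "S \<in> sets Bm"
    hence S': "S \<subseteq> {..<k}" using sBm by auto
    have "emeasure nu (space M \<times> S) = emeasure M (\<phi> -` (space M \<times> S) \<inter> space M)"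
      unfolding nu_def using S by (intro emeasure_distr[OF phi]) auto
    also have "\<phi> -` (space M \<times> S) \<inter> space M = f -` S \<inter> space M"
      by (auto simp: \<phi>_def)
    also have "emeasure M (f -` S \<inter> space M) = (\<Sum>i\<in>S. ennreal (q i))" using sumq[OF S'] by simp
    also have "\<dots> = emeasure Bm S" unfolding Bm_def block_measure_def
      using S' by (simp add: emeasure_point_measure_finite)
    finally show "emeasure nu (space M \<times> S) = emeasure Bm S" .
  qed
  define F where "F z = ennreal (\<bar>W (fst (fst z)) (fst (snd z)) - B (snd (fst z)) (snd (snd z))\<bar> powr p)"
    for z :: "('a \<times> nat) \<times> ('a \<times> nat)"
  have le2: "delta_p p M W Bm B \<le> enn_root p (\<integral>\<^sup>+ z. F z \<partial>(nu \<Otimes>\<^sub>M nu))"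
    unfolding delta_p_def F_def using p
    by (intro enn_root_mono INF_lower) (use cpl in auto)
  define PP where "PP = (M \<Otimes>\<^sub>M Bm) \<Otimes>\<^sub>M (M \<Otimes>\<^sub>M Bm)"
  have Wm: "(\<lambda>z. W (fst z) (snd z)) \<in> borel_measurable (M \<Otimes>\<^sub>M M)"
    using G by (simp add: graphon_def)
  have Wpart: "(\<lambda>z. W (fst (fst z)) (fst (snd z))) \<in> borel_measurable PP"
  proof -
    have "(\<lambda>z. (fst (fst z), fst (snd z))) \<in> PP \<rightarrow>\<^sub>M M \<Otimes>\<^sub>M M"
      unfolding PP_def by measurable
    from measurable_compose[OF this Wm] show ?thesis by simp
  qed
  have g1: "(\<lambda>z. snd (fst z)) \<in> PP \<rightarrow>\<^sub>M count_space {..<k}"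
  proof -
    have "(\<lambda>z. snd (fst z)) \<in> PP \<rightarrow>\<^sub>M Bm" unfolding PP_def by measurable
    then show ?thesis using measurable_cong_sets[OF refl sBm, of PP] by simp
  qed
  have g2: "(\<lambda>z. snd (snd z)) \<in> PP \<rightarrow>\<^sub>M count_space {..<k}"
  proof -
    have "(\<lambda>z. snd (snd z)) \<in> PP \<rightarrow>\<^sub>M Bm" unfolding PP_def by measurable
    then show ?thesis using measurable_cong_sets[OF refl sBm, of PP] by simp
  qed
  have Bpart: "(\<lambda>z. B (snd (fst z)) (snd (snd z))) \<in> borel_measurable PP"
  proof (rule measurable_compose_countable'[where f="\<lambda>i z. B i (snd (snd z))" and I="{..<k}", OF _ g1])
    fix i
    show "(\<lambda>z. B i (snd (snd z))) \<in> borel_measurable PP"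
      by (rule measurable_compose_countable'[where f="\<lambda>j z. B i j" and I="{..<k}", OF _ g2]) auto
  qed auto
  have Fm: "F \<in> borel_measurable PP"
    unfolding F_def using Wpart Bpart by measurable
  have sf: "sigma_finite_measure nu"
    unfolding nu_def by (rule prob_space_imp_sigma_finite, rule prob_space_distr[OF phi])
  have nunu: "nu \<Otimes>\<^sub>M nu = distr (M \<Otimes>\<^sub>M M) PP (\<lambda>(x, y). (\<phi> x, \<phi> y))"
    unfolding nu_def PP_def using sf unfolding nu_def by (rule pair_measure_distr[OF phi phi])
  have pm: "(\<lambda>(x, y). (\<phi> x, \<phi> y)) \<in> M \<Otimes>\<^sub>M M \<rightarrow>\<^sub>M PP"
    unfolding PP_def using phi by measurable
  have eq: "(\<integral>\<^sup>+ z. F z \<partial>(nu \<Otimes>\<^sub>M nu)) =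
     (\<integral>\<^sup>+ z. ennreal (\<bar>W (fst z) (snd z) - W (r (f (fst z))) (r (f (snd z)))\<bar> powr p) \<partial>(M \<Otimes>\<^sub>M M))"
  proof -
    have Fm': "F \<in> borel_measurable (distr (M \<Otimes>\<^sub>M M) PP (\<lambda>(x, y). (\<phi> x, \<phi> y)))"
      using Fm by simp
    show ?thesis unfolding nunu nn_integral_distr[OF pm Fm']
    by (simp add: F_def \<phi>_def B_def case_prod_beta)
  qed
  define E where "E x = infnorm (x - r (f x)) powr (\<alpha>*p)" for x
  define c where "c = 2 powr p * C powr p"
  have c0: "0 \<le> c" by (simp add: c_def)
  have Em: "(\<lambda>x. ennreal (E x)) \<in> borel_measurable M"
    unfolding E_def
  proof (rule measurable_compose_countable'[where f="\<lambda>i x. ennreal (infnorm (x - r i) powr (\<alpha>*p))" and I="{..<k}", OF _ f])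
    fix i
    have "(\<lambda>x. infnorm (x - r i) powr (\<alpha>*p)) \<in> borel_measurable borel"
      by measurable
    then show "(\<lambda>x. ennreal (infnorm (x - r i) powr (\<alpha>*p))) \<in> borel_measurable M"
      by (simp add: measurable_cong_sets[OF Mb refl])
  qed auto
  have sym: "\<And>a b. W a b = W b a" using G by (simp add: graphon_def)
  have pt: "\<bar>W x y - W (r (f x)) (r (f y))\<bar> powr p \<le> c * (E x + E y)" for x y
    using pt_test[OF H sym C p, where x=x and y=y and r=r and f=f] unfolding c_def E_def .
  have le3: "(\<integral>\<^sup>+ z. ennreal (\<bar>W (fst z) (snd z) - W (r (f (fst z))) (r (f (snd z)))\<bar> powr p) \<partial>(M \<Otimes>\<^sub>M M))
     \<le> ennreal (c * 2) * (\<integral>\<^sup>+ x. ennreal (E x) \<partial>M)"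
  proof -
    have Ep: "\<And>x. 0 \<le> E x" by (simp add: E_def)
    have "(\<integral>\<^sup>+ z. ennreal (\<bar>W (fst z) (snd z) - W (r (f (fst z))) (r (f (snd z)))\<bar> powr p) \<partial>(M \<Otimes>\<^sub>M M))
      \<le> (\<integral>\<^sup>+ z. ennreal c * (ennreal (E (fst z)) + ennreal (E (snd z))) \<partial>(M \<Otimes>\<^sub>M M))"
    proof (rule nn_integral_mono)
      fix z
      have "ennreal c * (ennreal (E (fst z)) + ennreal (E (snd z))) = ennreal (c * (E (fst z) + E (snd z)))"
        using c0 Ep by (simp add: ennreal_mult ennreal_plus)
      then show "ennreal (\<bar>W (fst z) (snd z) - W (r (f (fst z))) (r (f (snd z)))\<bar> powr p)
         \<le> ennreal c * (ennreal (E (fst z)) + ennreal (E (snd z)))"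
        using pt[of "fst z" "snd z"] by (simp add: ennreal_leI)
    qed
    also have "\<dots> = ennreal c * ((\<integral>\<^sup>+ z. ennreal (E (fst z)) \<partial>(M \<Otimes>\<^sub>M M)) + (\<integral>\<^sup>+ z. ennreal (E (snd z)) \<partial>(M \<Otimes>\<^sub>M M)))"
      using Em by (simp add: nn_integral_cmult nn_integral_add)
    also have "\<dots> = ennreal c * (2 * (\<integral>\<^sup>+ x. ennreal (E x) \<partial>M))"
      using nn_int_fst[OF M Em] nn_int_snd[OF M Em] by (simp add: mult_2)
    also have "\<dots> = ennreal (c * 2) * (\<integral>\<^sup>+ x. ennreal (E x) \<partial>M)"
      using c0 by (simp add: ennreal_mult mult.assoc)
    finally show ?thesis .
  qed
  have le4: "enn_root p (\<integral>\<^sup>+ z. F z \<partial>(nu \<Otimes>\<^sub>M nu)) \<le> enn_root p (ennreal (c * 2) * (\<integral>\<^sup>+ x. ennreal (E x) \<partial>M))"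
    by (rule enn_root_mono[OF le3[folded eq]]) (use p in linarith)
  have "eps_block p \<kappa> M W \<le> enn_root p (ennreal (c * 2) * (\<integral>\<^sup>+ x. ennreal (E x) \<partial>M))"
    using le1 le2 le4 by (rule order_trans[OF order_trans])
  then show ?thesis unfolding c_def E_def .
qed


lemma enn_root_ennreal: "0 \<le> v \<Longrightarrow> enn_root p (ennreal v) = ennreal (v powr (1/p))"
  by (simp add: enn_root_def)
lemma infnorm_le_iff_basis:
  fixes x :: "'a::euclidean_space"
  assumes "\<And>b. b \<in> Basis \<Longrightarrow> \<bar>x \<bullet> b\<bar> \<le> c"
  shows "infnorm x \<le> c"
  unfolding infnorm_Max using assms by (simp add: Max_le_iff)

definition grid :: "real \<Rightarrow> 'a::euclidean_space \<Rightarrow> 'a" where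
  "grid h x = (\<Sum>b\<in>Basis. (h * real_of_int \<lfloor>(x \<bullet> b) / h\<rfloor>) *\<^sub>R b)"

lemma grid_inner: "b \<in> Basis \<Longrightarrow> grid h x \<bullet> b = h * real_of_int \<lfloor>(x \<bullet> b) / h\<rfloor>"
  unfolding grid_def by (simp add: inner_sum_left inner_Basis if_distrib sum.delta cong: if_cong)

lemma grid_close:
  assumes "0 < h"
  shows "infnorm (x - grid h x) \<le> h"
proof (rule infnorm_le_iff_basis)
  fix b :: 'a assume b: "b \<in> Basis"
  have "(x - grid h x) \<bullet> b = x \<bullet> b - h * real_of_int \<lfloor>(x \<bullet> b) / h\<rfloor>"
    using b by (simp add: inner_diff_left grid_inner)
  moreover have "h * real_of_int \<lfloor>(x \<bullet> b) / h\<rfloor> \<le> h * ((x \<bullet> b) / h)"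
    using assms by (intro mult_left_mono) linarith+
  moreover have "h * ((x \<bullet> b) / h) < h * (real_of_int \<lfloor>(x \<bullet> b) / h\<rfloor> + 1)"
    using assms by (intro mult_strict_left_mono) linarith+
  moreover have "h * ((x \<bullet> b) / h) = x \<bullet> b" using assms by simp
  ultimately show "\<bar>(x - grid h x) \<bullet> b\<bar> \<le> h" using assms
    by (simp add: algebra_simps abs_le_iff)
qed

lemma grid_meas[measurable]: "grid h \<in> borel_measurable borel"
  unfolding grid_def by measurable

lemma grid_finite_card:
  assumes "0 < h"
  shows "finite (grid h ` {x::'a::euclidean_space. infnorm x \<le> R})
    \<and> card (grid h ` {x::'a. infnorm x \<le> R}) \<le> card {-\<lceil>R/h\<rceil>..\<lceil>R/h\<rceil>} ^ DIM('a)"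
proof -
  define m where "m = \<lceil>R/h\<rceil>"
  define J where "J = PiE (Basis::'a set) (\<lambda>_. {-m..m})"
  define e where "e j = (\<Sum>b\<in>Basis. (h * real_of_int (j b)) *\<^sub>R b)" for j :: "'a \<Rightarrow> int"
  have sub: "grid h ` {x::'a. infnorm x \<le> R} \<subseteq> e ` J"
  proof
    fix y assume "y \<in> grid h ` {x::'a. infnorm x \<le> R}"
    then obtain x where x: "infnorm x \<le> R" "y = grid h x" by auto
    define j where "j = restrict (\<lambda>b. \<lfloor>(x \<bullet> b) / h\<rfloor>) Basis"
    have "j \<in> J"
      unfolding J_def j_def
    proof (rule PiE_I)
      fix b :: 'a assume b: "b \<in> Basis"
      have xb: "\<bar>x \<bullet> b\<bar> \<le> R" using Basis_le_infnorm[OF b, of x] x by linarith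
      hence xb2: "-R \<le> x \<bullet> b" "x \<bullet> b \<le> R" by (auto simp: abs_le_iff)
      have d1: "(-R)/h \<le> (x \<bullet> b)/h" by (rule divide_right_mono) (use xb2 assms in auto)
      have d2: "(x \<bullet> b)/h \<le> R/h" by (rule divide_right_mono) (use xb2 assms in auto)
      have f1: "\<lfloor>(-R)/h\<rfloor> \<le> \<lfloor>(x \<bullet> b)/h\<rfloor>" using d1 by (rule floor_mono)
      have "real_of_int \<lfloor>(x \<bullet> b)/h\<rfloor> \<le> real_of_int \<lceil>R/h\<rceil>"
        using d2 of_int_floor_le[of "(x \<bullet> b)/h"] le_of_int_ceiling[of "R/h"] by linarith
      hence f2: "\<lfloor>(x \<bullet> b)/h\<rfloor> \<le> \<lceil>R/h\<rceil>" by linarith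
      have "\<lfloor>(-R)/h\<rfloor> = - \<lceil>R/h\<rceil>" by (simp add: ceiling_def)
      then show "restrict (\<lambda>b. \<lfloor>(x \<bullet> b) / h\<rfloor>) Basis b \<in> {-m..m}"
        using b f1 f2 by (simp add: m_def)
    qed auto
    moreover have "y = e j" unfolding x(2) e_def grid_def j_def
      by (rule sum.cong) auto
    ultimately show "y \<in> e ` J" by auto
  qed
  have fJ: "finite J" unfolding J_def by (simp add: finite_PiE)
  have cJ: "card J = card {-m..m} ^ DIM('a)" unfolding J_def by (simp add: card_PiE)
  have "finite (grid h ` {x::'a. infnorm x \<le> R})" using sub fJ finite_subset by blast
  moreover have "card (grid h ` {x::'a. infnorm x \<le> R}) \<le> card (e ` J)"
    using sub fJ by (intro card_mono) auto
  moreover have "card (e ` J) \<le> card J" using fJ by (rule card_image_le)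
  ultimately show ?thesis using cJ by (simp add: m_def)
qed

lemma grid_norm:
  assumes "0 < h"
  shows "infnorm (grid h y) \<le> infnorm y + h"
proof -
  have "grid h y = y - (y - grid h y)" by simp
  hence "infnorm (grid h y) \<le> infnorm y + infnorm (-(y - grid h y))"
    by (metis diff_conv_add_uminus infnorm_triangle)
  then show ?thesis using grid_close[OF assms, of y] infnorm_sub[of "grid h y" y] by simp
qed

lemma quantization:
  fixes M :: "'a::euclidean_space measure"
  assumes M: "prob_space M" and Mb: "sets M = sets borel"
    and \<kappa>: "0 < \<kappa>" "\<kappa> \<le> 1" and h: "0 < h" "h \<le> R" and s: "0 < s"
  shows "\<exists>(k::nat) (f::'a \<Rightarrow> nat) r. 1 \<le> k \<and> f \<in> M \<rightarrow>\<^sub>M count_space {..<k}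
     \<and> (\<forall>i<k. \<kappa> \<le> measure M (f -` {i} \<inter> space M))
     \<and> (\<integral>\<^sup>+ x. ennreal (infnorm (x - r (f x)) powr s) \<partial>M)
        \<le> ennreal (h powr s) + ennreal ((3*R) powr s * (real (card {-\<lceil>R/h\<rceil>..\<lceil>R/h\<rceil>} ^ DIM('a)) * \<kappa>))
          + (\<integral>\<^sup>+ x. ennreal (indicator {x. R < infnorm x} x * (3 * infnorm x) powr s) \<partial>M)"
proof -
  interpret prob_space M by fact
  have spM: "space M = UNIV" using sets_eq_imp_space_eq[OF Mb] by simp
  define box where "box = {x::'a. infnorm x \<le> R}"
  define g where "g = (grid h :: 'a \<Rightarrow> 'a)"
  define L where "L = g ` box"
  define N where "N = card {-\<lceil>R/h\<rceil>..\<lceil>R/h\<rceil>} ^ DIM('a)"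
  have fL: "finite L" and cL: "card L \<le> N"
    using grid_finite_card[OF h(1), of R] by (auto simp: L_def g_def box_def N_def)
  have gm: "g \<in> borel_measurable borel" by (simp add: g_def)
  have boxb: "box \<in> sets borel"
    using measurable_sets[OF infnorm_borel, of "{..R}"] by (simp add: box_def vimage_def)
  have gpre: "g -` A \<in> sets borel" if "finite A" for A
    using measurable_sets[OF gm borel_closed[OF finite_imp_closed[OF that]]] by simp
  define S where "S l = box \<inter> g -` {l}" for l
  have SM: "S l \<in> sets M" for l using gpre[of "{l}"] boxb Mb by (simp add: S_def)
  define Good where "Good = {l \<in> L. \<kappa> \<le> measure M (S l)}"
  define Good' where "Good' = (if Good = {} then {0} else Good)"
  define l0 where "l0 = (SOME l. l \<in> Good')"
  have l0G: "l0 \<in> Good'" unfolding l0_def by (rule someI_ex) (auto simp: Good'_def)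
  have fG: "finite Good" using fL by (simp add: Good_def)
  have fG': "finite Good'" using fG by (simp add: Good'_def)
  define lab where "lab x = (if x \<in> box \<and> g x \<in> Good then g x else l0)" for x
  have labG: "lab x \<in> Good'" for x using l0G by (cases "Good = {}") (auto simp: lab_def Good'_def)
  define k where "k = card Good'"
  define idx where "idx = to_nat_on Good'"
  have bij: "bij_betw idx Good' {..<k}" using to_nat_on_finite[OF fG'] by (simp add: idx_def k_def)
  have inj: "inj_on idx Good'" using bij by (rule bij_betw_imp_inj_on)
  define r where "r = inv_into Good' idx"
  define f where "f x = idx (lab x)" for x
  have rf: "r (f x) = lab x" for x unfolding r_def f_def by (rule inv_into_f_f[OF inj labG])
  have k1: "1 \<le> k" unfolding k_def using fG' l0G by (metis card_0_eq empty_iff less_one not_less)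
  have fk: "f x < k" for x using bij_betw_apply[OF bij labG] by (simp add: f_def)
  have labpre: "{x. lab x = l} \<in> sets borel" for l
  proof -
    have "{x. lab x = l} = (box \<inter> g -` (Good \<inter> {l})) \<union> (if l = l0 then - (box \<inter> g -` Good) else {})"
      by (auto simp: lab_def)
    then show ?thesis using boxb gpre[of "Good \<inter> {l}"] gpre[of Good] fG by auto
  qed
  have ri: "i < k \<Longrightarrow> r i \<in> Good' \<and> idx (r i) = i" for i
    using bij unfolding r_def by (metis bij_betw_def f_inv_into_f inv_into_into lessThan_iff)
  have fpre: "f -` {i} \<inter> space M = {x. lab x = r i}" if "i < k" for i
  proof -
    have "f x = i \<longleftrightarrow> lab x = r i" for x
      using ri[OF that] inj labG[of x] unfolding f_def by (metis inj_on_def)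
    then show ?thesis using spM by auto
  qed
  have fmeas: "f \<in> M \<rightarrow>\<^sub>M count_space {..<k}"
    unfolding measurable_count_space_eq2[OF finite_lessThan]
    using fk fpre labpre Mb by auto
  have mass: "\<forall>i<k. \<kappa> \<le> measure M (f -` {i} \<inter> space M)"
  proof (intro allI impI)
    fix i assume i: "i < k"
    show "\<kappa> \<le> measure M (f -` {i} \<inter> space M)"
    proof (cases "Good = {}")
      case True
      hence "\<And>x. lab x = l0" by (simp add: lab_def)
      moreover have "r i = l0" using ri[OF i] l0G True by (simp add: Good'_def)
      ultimately have "f -` {i} \<inter> space M = space M" using fpre[OF i] spM by auto
      then show ?thesis using \<kappa> by (simp add: prob_space)
    next
      case False
      hence rG: "r i \<in> Good" using ri[OF i] by (simp add: Good'_def)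
      have "S (r i) \<subseteq> {x. lab x = r i}" using rG by (auto simp: S_def lab_def)
      hence "measure M (S (r i)) \<le> measure M {x. lab x = r i}"
        using labpre Mb by (intro finite_measure_mono) auto
      then show ?thesis using rG fpre[OF i] by (simp add: Good_def)
    qed
  qed
  define Bd where "Bd = box \<inter> - g -` Good"
  have BdM: "Bd \<in> sets M" using boxb gpre[OF fG] Mb by (auto simp: Bd_def)
  define T where "T x = indicator {x. R < infnorm x} x * (3 * infnorm x) powr s" for x :: 'a
  define c where "c = (3*R) powr s"
  have R0: "0 < R" using h by linarith
  have l0n: "infnorm l0 \<le> 2*R"
  proof (cases "Good = {}")
    case True then show ?thesis using l0G R0 by (simp add: Good'_def infnorm_0)
  next
    case False
    hence "l0 \<in> Good" using l0G by (simp add: Good'_def)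
    hence "l0 \<in> L" by (simp add: Good_def)
    then obtain y where y: "y \<in> box" "l0 = g y" by (auto simp: L_def)
    have "infnorm l0 \<le> infnorm y + h" using grid_norm[OF h(1), of y] y by (simp add: g_def)
    then show ?thesis using y h by (simp add: box_def)
  qed
  have tri: "infnorm (x - l0) \<le> infnorm x + 2*R" for x
    using infnorm_triangle[of x "-l0"] infnorm_neg[of l0] l0n by simp
  have pt: "infnorm (x - r (f x)) powr s \<le> h powr s + c * indicator Bd x + T x" for x
  proof -
    have T0: "0 \<le> T x" by (simp add: T_def)
    have c0: "0 \<le> c * indicator Bd x" by (simp add: c_def)
    consider (a) "x \<in> box" "g x \<in> Good" | (b) "x \<in> box" "g x \<notin> Good" | (c) "x \<notin> box" by blast
    then show ?thesis
    proof cases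
      case a
      hence "r (f x) = g x" by (simp add: rf lab_def)
      hence "infnorm (x - r (f x)) powr s \<le> h powr s"
        using grid_close[OF h(1), of x] s by (auto simp: g_def infnorm_pos_le intro!: powr_mono2)
      then show ?thesis using T0 c0 by linarith
    next
      case b
      hence "r (f x) = l0" by (simp add: rf lab_def)
      moreover have "infnorm (x - l0) \<le> 3*R" using tri[of x] b by (simp add: box_def)
      ultimately have "infnorm (x - r (f x)) powr s \<le> c" unfolding c_def using s
        by (auto simp: infnorm_pos_le intro!: powr_mono2)
      moreover have "x \<in> Bd" using b by (simp add: Bd_def)
      hence "c * indicator Bd x = c" by simp
      moreover have "0 \<le> h powr s" by simp
      ultimately show ?thesis using T0 by linarith
    next
      case c
      hence "r (f x) = l0" by (simp add: rf lab_def)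
      moreover have xR: "R < infnorm x" using c by (simp add: box_def)
      moreover have "infnorm (x - l0) \<le> 3 * infnorm x" using tri[of x] xR by simp
      ultimately have "infnorm (x - r (f x)) powr s \<le> T x" unfolding T_def using s
        by (auto simp: infnorm_pos_le intro!: powr_mono2)
      moreover have "0 \<le> h powr s" by simp
      ultimately show ?thesis using c0 by linarith
    qed
  qed
  have Tm: "(\<lambda>x. ennreal (T x)) \<in> borel_measurable M"
  proof -
    have "(\<lambda>x. T x) \<in> borel_measurable borel" unfolding T_def by measurable
    then show ?thesis by (simp add: measurable_cong_sets[OF Mb refl])
  qed
  have BdS: "Bd \<subseteq> (\<Union>l\<in>L - Good. S l)"
    by (auto simp: Bd_def S_def L_def)
  have "emeasure M Bd \<le> emeasure M (\<Union>l\<in>L - Good. S l)"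
    using BdS SM fL by (intro emeasure_mono) auto
  also have "\<dots> \<le> (\<Sum>l\<in>L - Good. emeasure M (S l))"
    using SM fL by (intro emeasure_subadditive_finite) auto
  also have "\<dots> \<le> (\<Sum>l\<in>L - Good. ennreal \<kappa>)"
  proof (rule sum_mono)
    fix l assume "l \<in> L - Good"
    hence "measure M (S l) < \<kappa>" by (auto simp: Good_def)
    then show "emeasure M (S l) \<le> ennreal \<kappa>" by (simp add: emeasure_eq_measure ennreal_leI)
  qed
  also have "\<dots> = ennreal (real (card (L - Good)) * \<kappa>)"
    using \<kappa> by (simp add: ennreal_mult ennreal_of_nat_eq_real_of_nat)
  also have "\<dots> \<le> ennreal (real N * \<kappa>)"
  proof -
    have "card (L - Good) \<le> N" using cL card_Diff_subset fL
      by (meson card_mono Diff_subset order_trans)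
    then show ?thesis using \<kappa> by (intro ennreal_leI mult_right_mono) auto
  qed
  finally have BdN: "emeasure M Bd \<le> ennreal (real N * \<kappa>)" .
  have "(\<integral>\<^sup>+ x. ennreal (infnorm (x - r (f x)) powr s) \<partial>M)
      \<le> (\<integral>\<^sup>+ x. ennreal (h powr s) + ennreal c * indicator Bd x + ennreal (T x) \<partial>M)"
  proof (rule nn_integral_mono)
    fix x
    have "ennreal (h powr s) + ennreal c * indicator Bd x + ennreal (T x)
        = ennreal (h powr s + c * indicator Bd x + T x)"
      by (simp add: ennreal_plus ennreal_mult ennreal_indicator c_def T_def)
    then show "ennreal (infnorm (x - r (f x)) powr s)
        \<le> ennreal (h powr s) + ennreal c * indicator Bd x + ennreal (T x)"
      using pt[of x] by (simp add: ennreal_leI)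
  qed
  also have "\<dots> = ennreal (h powr s) + ennreal c * emeasure M Bd + (\<integral>\<^sup>+ x. ennreal (T x) \<partial>M)"
    using BdM Tm by (simp add: nn_integral_add nn_integral_cmult_indicator emeasure_space_1)
  also have "\<dots> \<le> ennreal (h powr s) + ennreal (c * (real N * \<kappa>)) + (\<integral>\<^sup>+ x. ennreal (T x) \<partial>M)"
  proof -
    have "ennreal c * emeasure M Bd \<le> ennreal c * ennreal (real N * \<kappa>)"
      using BdN by (rule mult_left_mono) simp
    also have "\<dots> = ennreal (c * (real N * \<kappa>))"
      by (rule ennreal_mult[symmetric]) (use \<kappa> in \<open>auto simp: c_def\<close>)
    finally show ?thesis by (intro add_mono) auto
  qed
  finally have fin: "(\<integral>\<^sup>+ x. ennreal (infnorm (x - r (f x)) powr s) \<partial>M)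
    \<le> ennreal (h powr s) + ennreal (c * (real N * \<kappa>)) + (\<integral>\<^sup>+ x. ennreal (T x) \<partial>M)" .
  have fin2: "(\<integral>\<^sup>+ x. ennreal (infnorm (x - r (f x)) powr s) \<partial>M)
        \<le> ennreal (h powr s) + ennreal ((3*R) powr s * (real (card {-\<lceil>R/h\<rceil>..\<lceil>R/h\<rceil>} ^ DIM('a)) * \<kappa>))
          + (\<integral>\<^sup>+ x. ennreal (indicator {x. R < infnorm x} x * (3 * infnorm x) powr s) \<partial>M)"
    using fin unfolding c_def N_def T_def by simp
  show ?thesis using k1 fmeas mass fin2 by blast
qed


lemma W_bound:
  fixes M :: "'a::euclidean_space measure" and W :: "'a \<Rightarrow> 'a \<Rightarrow> real"
  assumes M: "prob_space M" and Mb: "sets M = sets borel" and G: "graphon M W"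
    and N1: "(\<integral>\<^sup>+ z. ennreal \<bar>W (fst z) (snd z)\<bar> \<partial>(M \<Otimes>\<^sub>M M)) = 1"
    and H: "\<forall>x x' y. \<bar>W x y - W x' y\<bar> \<le> C * infnorm (x - x') powr \<alpha>"
    and C: "0 \<le> C" and \<alpha>: "0 < \<alpha>" "\<alpha> \<le> 1"
    and A: "(\<integral>\<^sup>+ x. ennreal (infnorm x powr \<alpha>) \<partial>M) \<le> ennreal A" and A0: "0 \<le> A"
  shows "W x y \<le> 1 + C * (infnorm x powr \<alpha> + A) + C * (infnorm y powr \<alpha> + A)"
proof -
  interpret MM: prob_space "M \<Otimes>\<^sub>M M" using prob_space_pair[OF M M] .
  have W0: "\<And>a b. 0 \<le> W a b" and sym: "\<And>a b. W a b = W b a" using G by (auto simp: graphon_def)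
  have sub: "infnorm (a - b) powr \<alpha> \<le> infnorm a powr \<alpha> + infnorm b powr \<alpha>" for a b :: 'a
  proof -
    have "infnorm (a - b) \<le> infnorm a + infnorm b"
      using infnorm_triangle[of a "-b"] by (simp add: infnorm_neg)
    hence "infnorm (a - b) powr \<alpha> \<le> (infnorm a + infnorm b) powr \<alpha>"
      using \<alpha> by (intro powr_mono2) (auto simp: infnorm_pos_le)
    also have "\<dots> \<le> infnorm a powr \<alpha> + infnorm b powr \<alpha>"
      using \<alpha> by (intro powr_subadd) (auto simp: infnorm_pos_le)
    finally show ?thesis .
  qed
  have pt: "W x y \<le> W x' y' + (C * infnorm x powr \<alpha> + C * infnorm y powr \<alpha>)
      + C * infnorm x' powr \<alpha> + C * infnorm y' powr \<alpha>" for x' y'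
  proof -
    have 1: "W x y \<le> W x' y + C * infnorm (x - x') powr \<alpha>" using H[rule_format, of x y x'] by linarith
    have "W y x' \<le> W y' x' + C * infnorm (y - y') powr \<alpha>" using H[rule_format, of y x' y'] by linarith
    moreover have "W y x' = W x' y" "W y' x' = W x' y'" by (rule sym)+
    ultimately have 2: "W x' y \<le> W x' y' + C * infnorm (y - y') powr \<alpha>" by simp
    have 3: "C * infnorm (x - x') powr \<alpha> \<le> C * infnorm x powr \<alpha> + C * infnorm x' powr \<alpha>"
      using sub[of x x'] C by (simp add: distrib_left[symmetric] mult_left_mono)
    have 4: "C * infnorm (y - y') powr \<alpha> \<le> C * infnorm y powr \<alpha> + C * infnorm y' powr \<alpha>"
      using sub[of y y'] C by (simp add: distrib_left[symmetric] mult_left_mono)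
    show ?thesis using 1 2 3 4 by linarith
  qed
  define c where "c = C * infnorm x powr \<alpha> + C * infnorm y powr \<alpha>"
  have c0: "0 \<le> c" using C by (simp add: c_def)
  have Wm: "(\<lambda>z. ennreal (W (fst z) (snd z))) \<in> borel_measurable (M \<Otimes>\<^sub>M M)"
    using G by (simp add: graphon_def)
  have nm: "(\<lambda>x. ennreal (C * infnorm x powr \<alpha>)) \<in> borel_measurable M"
  proof -
    have "(\<lambda>x. C * infnorm x powr \<alpha>) \<in> borel_measurable borel" by measurable
    then show ?thesis by (simp add: measurable_cong_sets[OF Mb refl])
  qed
  have nmf: "(\<lambda>z. ennreal (C * infnorm (fst z) powr \<alpha>)) \<in> borel_measurable (M \<Otimes>\<^sub>M M)"
    by (rule measurable_compose[OF measurable_fst nm])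
  have nms: "(\<lambda>z. ennreal (C * infnorm (snd z) powr \<alpha>)) \<in> borel_measurable (M \<Otimes>\<^sub>M M)"
    by (rule measurable_compose[OF measurable_snd nm])
  have IC: "(\<integral>\<^sup>+ x. ennreal (C * infnorm x powr \<alpha>) \<partial>M) \<le> ennreal (C * A)"
  proof -
    have "(\<integral>\<^sup>+ x. ennreal (C * infnorm x powr \<alpha>) \<partial>M) = ennreal C * (\<integral>\<^sup>+ x. ennreal (infnorm x powr \<alpha>) \<partial>M)"
      using C by (subst nn_integral_cmult[symmetric]) (auto simp: ennreal_mult measurable_cong_sets[OF Mb refl])
    also have "\<dots> \<le> ennreal C * ennreal A" using A by (rule mult_left_mono) simp
    finally show ?thesis using C A0 by (simp add: ennreal_mult)
  qed
  have "ennreal (W x y) = (\<integral>\<^sup>+ z. ennreal (W x y) \<partial>(M \<Otimes>\<^sub>M M))"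
    by (simp add: MM.emeasure_space_1)
  also have "\<dots> \<le> (\<integral>\<^sup>+ z. ennreal (W (fst z) (snd z)) + ennreal c
      + ennreal (C * infnorm (fst z) powr \<alpha>) + ennreal (C * infnorm (snd z) powr \<alpha>) \<partial>(M \<Otimes>\<^sub>M M))"
  proof (rule nn_integral_mono)
    fix z :: "'a \<times> 'a"
    have "ennreal (W (fst z) (snd z)) + ennreal c + ennreal (C * infnorm (fst z) powr \<alpha>) + ennreal (C * infnorm (snd z) powr \<alpha>)
      = ennreal (W (fst z) (snd z) + c + C * infnorm (fst z) powr \<alpha> + C * infnorm (snd z) powr \<alpha>)"
      using W0 c0 C by (simp add: ennreal_plus)
    then show "ennreal (W x y) \<le> ennreal (W (fst z) (snd z)) + ennreal c + ennreal (C * infnorm (fst z) powr \<alpha>) + ennreal (C * infnorm (snd z) powr \<alpha>)"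
      using pt[of "fst z" "snd z"] by (simp add: ennreal_leI c_def)
  qed
  also have "\<dots> = (\<integral>\<^sup>+ z. ennreal (W (fst z) (snd z)) \<partial>(M \<Otimes>\<^sub>M M)) + ennreal c
      + (\<integral>\<^sup>+ z. ennreal (C * infnorm (fst z) powr \<alpha>) \<partial>(M \<Otimes>\<^sub>M M))
      + (\<integral>\<^sup>+ z. ennreal (C * infnorm (snd z) powr \<alpha>) \<partial>(M \<Otimes>\<^sub>M M))"
    using Wm nmf nms by (simp add: nn_integral_add MM.emeasure_space_1)
  also have "\<dots> = 1 + ennreal c + (\<integral>\<^sup>+ x. ennreal (C * infnorm x powr \<alpha>) \<partial>M)
      + (\<integral>\<^sup>+ x. ennreal (C * infnorm x powr \<alpha>) \<partial>M)"
    using N1 W0 nn_int_fst[OF M nm] nn_int_snd[OF M nm] by simp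
  also have "\<dots> \<le> 1 + ennreal c + ennreal (C * A) + ennreal (C * A)"
    using IC by (intro add_mono) auto
  also have "\<dots> = ennreal (1 + c + C * A + C * A)"
  proof -
    have CA: "0 \<le> C * A" using C A0 by simp
    have "ennreal (1 + c + C * A + C * A) = ennreal (1 + c + C * A) + ennreal (C * A)"
      by (rule ennreal_plus) (use CA c0 in auto)
    also have "ennreal (1 + c + C * A) = ennreal (1 + c) + ennreal (C * A)"
      by (rule ennreal_plus) (use CA c0 in auto)
    also have "ennreal (1 + c) = 1 + ennreal c"
      using c0 by (simp add: ennreal_plus)
    finally show ?thesis by simp
  qed
  also have "1 + c + C * A + C * A = 1 + C * (infnorm x powr \<alpha> + A) + C * (infnorm y powr \<alpha> + A)"
    by (simp add: c_def algebra_simps)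
  finally show ?thesis using C A0 by (subst (asm) ennreal_le_iff) (auto intro!: add_nonneg_nonneg)
qed

lemma tail_bound:
  fixes M :: "'a::euclidean_space measure" and W :: "'a \<Rightarrow> 'a \<Rightarrow> real"
  assumes M: "prob_space M" and Mb: "sets M = sets borel" and G: "graphon M W"
    and Wb: "\<And>x y. W x y \<le> c0 + C * infnorm x powr \<alpha> + C * infnorm y powr \<alpha>"
    and C: "0 \<le> C" and c0: "0 \<le> c0" and \<alpha>: "0 < \<alpha>" and p: "1 \<le> p" and pq: "p < \<beta> / \<alpha>"
    and mom: "(\<integral>\<^sup>+ x. ennreal (infnorm x powr \<beta>) \<partial>M) \<le> ennreal mb" and mb: "0 \<le> mb"
    and \<rho>: "0 < \<rho>"
  shows "graphon_tail p \<rho> M W \<le> ennreal ((3 powr (\<beta>/\<alpha>) * (c0 powr (\<beta>/\<alpha>) + 2 * C powr (\<beta>/\<alpha>) * mb)) powr (1/p)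
            * \<rho> powr (\<beta> / (p * \<alpha>) - 1))"
proof -
  interpret MM: prob_space "M \<Otimes>\<^sub>M M" using prob_space_pair[OF M M] .
  define q where "q = \<beta> / \<alpha>"
  define \<gamma> where "\<gamma> = q - p"
  have \<gamma>0: "0 < \<gamma>" using pq by (simp add: \<gamma>_def q_def)
  have q0: "0 \<le> q" using \<gamma>0 p by (simp add: \<gamma>_def)
  have aq: "\<alpha> * q = \<beta>" using \<alpha> by (simp add: q_def)
  have W0: "\<And>a b. 0 \<le> W a b" using G by (auto simp: graphon_def)
  define a where "a = \<rho> powr \<gamma> * 3 powr q"
  have a0: "0 \<le> a" by (simp add: a_def)
  define Cq where "Cq = C powr q"
  have Cq0: "0 \<le> Cq" by (simp add: Cq_def)
  have pt: "\<bar>W x y - min (W x y) (1/\<rho>)\<bar> powr p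
       \<le> a * c0 powr q + a * Cq * infnorm x powr \<beta> + a * Cq * infnorm y powr \<beta>" for x y
  proof -
    define G' where "G' = c0 + C * infnorm x powr \<alpha> + C * infnorm y powr \<alpha>"
    have G'0: "0 \<le> G'" using C c0 by (simp add: G'_def)
    have WG: "W x y \<le> G'" using Wb by (simp add: G'_def)
    have sa: "\<bar>W x y - min (W x y) (1/\<rho>)\<bar> powr p \<le> \<rho> powr \<gamma> * G' powr q"
    proof (cases "W x y \<le> 1/\<rho>")
      case True
      then show ?thesis using p by simp
    next
      case False
      hence Wg: "1/\<rho> < W x y" by simp
      have ir: "0 < 1/\<rho>" using \<rho> by simp
      have "\<bar>W x y - min (W x y) (1/\<rho>)\<bar> = W x y - 1/\<rho>" using Wg by simp
      hence "\<bar>W x y - min (W x y) (1/\<rho>)\<bar> powr p \<le> G' powr p"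
        using WG Wg \<rho> p by (intro powr_mono2) (use ir in linarith)+
      also have "G' powr p \<le> G' powr p * (\<rho> * G') powr \<gamma>"
      proof -
        have "1 < \<rho> * W x y" using Wg \<rho> by (simp add: field_simps)
        moreover have "\<rho> * W x y \<le> \<rho> * G'" using WG \<rho> by simp
        ultimately have "1 \<le> \<rho> * G'" by linarith
        hence "1 \<le> (\<rho> * G') powr \<gamma>" using \<gamma>0 by (simp add: ge_one_powr_ge_zero)
        then show ?thesis by (simp add: mult_le_cancel_left1)
      qed
      also have "\<dots> = \<rho> powr \<gamma> * G' powr q"
      proof -
        have Gp: "0 < G'" using ir Wg WG by linarith
        have "G' powr q = G' powr p * G' powr \<gamma>" unfolding \<gamma>_def by (simp add: powr_add[symmetric])
        then show ?thesis using \<rho> Gp by (simp add: powr_mult)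
      qed
      finally show ?thesis .
    qed
    also have "\<rho> powr \<gamma> * G' powr q \<le> \<rho> powr \<gamma> * (3 powr q * (c0 powr q + (C * infnorm x powr \<alpha>) powr q + (C * infnorm y powr \<alpha>) powr q))"
      unfolding G'_def using C c0 q0 by (intro mult_left_mono powr_sum3) auto
    also have "(C * infnorm x powr \<alpha>) powr q = Cq * infnorm x powr \<beta>"
      using C by (simp add: powr_mult powr_powr aq Cq_def)
    also have "(C * infnorm y powr \<alpha>) powr q = Cq * infnorm y powr \<beta>"
      using C by (simp add: powr_mult powr_powr aq Cq_def)
    also have "\<rho> powr \<gamma> * (3 powr q * (c0 powr q + Cq * infnorm x powr \<beta> + Cq * infnorm y powr \<beta>))
        = a * c0 powr q + a * Cq * infnorm x powr \<beta> + a * Cq * infnorm y powr \<beta>"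
      by (simp add: a_def algebra_simps)
    finally show ?thesis .
  qed
  have bm: "(\<lambda>x. ennreal (infnorm x powr \<beta>)) \<in> borel_measurable M"
  proof -
    have "(\<lambda>x. infnorm x powr \<beta>) \<in> borel_measurable borel" by measurable
    then show ?thesis by (simp add: measurable_cong_sets[OF Mb refl])
  qed
  have bmc: "(\<lambda>x. ennreal (a * Cq) * ennreal (infnorm x powr \<beta>)) \<in> borel_measurable M"
    using bm by simp
  have IB: "(\<integral>\<^sup>+ x. ennreal (a * Cq) * ennreal (infnorm x powr \<beta>) \<partial>M) \<le> ennreal (a * Cq * mb)"
  proof -
    have "(\<integral>\<^sup>+ x. ennreal (a * Cq) * ennreal (infnorm x powr \<beta>) \<partial>M)
        = ennreal (a * Cq) * (\<integral>\<^sup>+ x. ennreal (infnorm x powr \<beta>) \<partial>M)"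
      using bm by (rule nn_integral_cmult)
    also have "\<dots> \<le> ennreal (a * Cq) * ennreal mb" using mom by (rule mult_left_mono) simp
    also have "\<dots> = ennreal (a * Cq * mb)" using a0 Cq0 mb by (simp add: ennreal_mult)
    finally show ?thesis .
  qed
  have "(\<integral>\<^sup>+ z. ennreal (\<bar>W (fst z) (snd z) - min (W (fst z) (snd z)) (1/\<rho>)\<bar> powr p) \<partial>(M \<Otimes>\<^sub>M M))
      \<le> (\<integral>\<^sup>+ z. ennreal (a * c0 powr q) + ennreal (a * Cq) * ennreal (infnorm (fst z) powr \<beta>)
            + ennreal (a * Cq) * ennreal (infnorm (snd z) powr \<beta>) \<partial>(M \<Otimes>\<^sub>M M))"
  proof (rule nn_integral_mono)
    fix z :: "'a \<times> 'a"
    have "ennreal (a * c0 powr q) + ennreal (a * Cq) * ennreal (infnorm (fst z) powr \<beta>)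
            + ennreal (a * Cq) * ennreal (infnorm (snd z) powr \<beta>)
        = ennreal (a * c0 powr q + a * Cq * infnorm (fst z) powr \<beta> + a * Cq * infnorm (snd z) powr \<beta>)"
      using a0 Cq0 by (simp add: ennreal_plus ennreal_mult)
    then show "ennreal (\<bar>W (fst z) (snd z) - min (W (fst z) (snd z)) (1/\<rho>)\<bar> powr p)
        \<le> ennreal (a * c0 powr q) + ennreal (a * Cq) * ennreal (infnorm (fst z) powr \<beta>)
            + ennreal (a * Cq) * ennreal (infnorm (snd z) powr \<beta>)"
      using pt[of "fst z" "snd z"] by (simp add: ennreal_leI)
  qed
  also have "\<dots> = ennreal (a * c0 powr q) + (\<integral>\<^sup>+ z. ennreal (a * Cq) * ennreal (infnorm (fst z) powr \<beta>) \<partial>(M \<Otimes>\<^sub>M M))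
            + (\<integral>\<^sup>+ z. ennreal (a * Cq) * ennreal (infnorm (snd z) powr \<beta>) \<partial>(M \<Otimes>\<^sub>M M))"
  proof -
    have m1: "(\<lambda>z. ennreal (a * Cq) * ennreal (infnorm (fst z) powr \<beta>)) \<in> borel_measurable (M \<Otimes>\<^sub>M M)"
      by (rule measurable_compose[OF measurable_fst bmc])
    have m2: "(\<lambda>z. ennreal (a * Cq) * ennreal (infnorm (snd z) powr \<beta>)) \<in> borel_measurable (M \<Otimes>\<^sub>M M)"
      by (rule measurable_compose[OF measurable_snd bmc])
    have m0: "(\<lambda>z::'a\<times>'a. ennreal (a * c0 powr q)) \<in> borel_measurable (M \<Otimes>\<^sub>M M)" by simp
    have m01: "(\<lambda>z. ennreal (a * c0 powr q) + ennreal (a * Cq) * ennreal (infnorm (fst z) powr \<beta>)) \<in> borel_measurable (M \<Otimes>\<^sub>M M)"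
      by (rule borel_measurable_add[OF m0 m1])
    have "(\<integral>\<^sup>+ z. ennreal (a * c0 powr q) + ennreal (a * Cq) * ennreal (infnorm (fst z) powr \<beta>)
            + ennreal (a * Cq) * ennreal (infnorm (snd z) powr \<beta>) \<partial>(M \<Otimes>\<^sub>M M))
      = (\<integral>\<^sup>+ z. ennreal (a * c0 powr q) + ennreal (a * Cq) * ennreal (infnorm (fst z) powr \<beta>) \<partial>(M \<Otimes>\<^sub>M M))
        + (\<integral>\<^sup>+ z. ennreal (a * Cq) * ennreal (infnorm (snd z) powr \<beta>) \<partial>(M \<Otimes>\<^sub>M M))"
      by (rule nn_integral_add[OF m01 m2])
    also have "(\<integral>\<^sup>+ z. ennreal (a * c0 powr q) + ennreal (a * Cq) * ennreal (infnorm (fst z) powr \<beta>) \<partial>(M \<Otimes>\<^sub>M M))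
      = (\<integral>\<^sup>+ z. ennreal (a * c0 powr q) \<partial>(M \<Otimes>\<^sub>M M)) + (\<integral>\<^sup>+ z. ennreal (a * Cq) * ennreal (infnorm (fst z) powr \<beta>) \<partial>(M \<Otimes>\<^sub>M M))"
      by (rule nn_integral_add[OF m0 m1])
    also have "(\<integral>\<^sup>+ z. ennreal (a * c0 powr q) \<partial>(M \<Otimes>\<^sub>M M)) = ennreal (a * c0 powr q)"
      by (simp add: MM.emeasure_space_1)
    finally show ?thesis .
  qed
  also have "\<dots> = ennreal (a * c0 powr q) + (\<integral>\<^sup>+ x. ennreal (a * Cq) * ennreal (infnorm x powr \<beta>) \<partial>M)
            + (\<integral>\<^sup>+ x. ennreal (a * Cq) * ennreal (infnorm x powr \<beta>) \<partial>M)"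
    using nn_int_fst[OF M bmc] nn_int_snd[OF M bmc] by simp
  also have "\<dots> \<le> ennreal (a * c0 powr q) + ennreal (a * Cq * mb) + ennreal (a * Cq * mb)"
    using IB by (intro add_mono) auto
  also have "\<dots> = ennreal (a * (c0 powr q + 2 * Cq * mb))"
  proof -
    have t: "0 \<le> a * Cq * mb" using a0 Cq0 mb by simp
    have "ennreal (a * (c0 powr q + 2 * Cq * mb)) = ennreal (a * c0 powr q + a * Cq * mb + a * Cq * mb)"
      by (simp add: algebra_simps)
    also have "\<dots> = ennreal (a * c0 powr q + a * Cq * mb) + ennreal (a * Cq * mb)"
      by (rule ennreal_plus) (use t a0 in auto)
    also have "ennreal (a * c0 powr q + a * Cq * mb) = ennreal (a * c0 powr q) + ennreal (a * Cq * mb)"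
      by (rule ennreal_plus) (use t a0 in auto)
    finally show ?thesis by simp
  qed
  finally have I: "(\<integral>\<^sup>+ z. ennreal (\<bar>W (fst z) (snd z) - min (W (fst z) (snd z)) (1/\<rho>)\<bar> powr p) \<partial>(M \<Otimes>\<^sub>M M))
      \<le> ennreal (a * (c0 powr q + 2 * Cq * mb))" .
  define K1 where "K1 = 3 powr q * (c0 powr q + 2 * Cq * mb)"
  have K10: "0 \<le> K1" using Cq0 mb by (simp add: K1_def)
  have aK: "a * (c0 powr q + 2 * Cq * mb) = \<rho> powr \<gamma> * K1" by (simp add: a_def K1_def)
  have "graphon_tail p \<rho> M W \<le> enn_root p (ennreal (\<rho> powr \<gamma> * K1))"
    unfolding graphon_tail_def graphon_norm_def using I aK p by (intro enn_root_mono) auto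
  also have "\<dots> = ennreal ((\<rho> powr \<gamma> * K1) powr (1/p))" using K10 by (simp add: enn_root_ennreal)
  also have "(\<rho> powr \<gamma> * K1) powr (1/p) = K1 powr (1/p) * \<rho> powr (\<beta> / (p * \<alpha>) - 1)"
  proof -
    have "\<gamma> * (1/p) = \<beta> / (p * \<alpha>) - 1" using p \<alpha> by (simp add: \<gamma>_def q_def field_simps)
    then show ?thesis using K10 \<rho> by (simp add: powr_mult powr_powr)
  qed
  finally show ?thesis by (simp add: K1_def q_def Cq_def)
qed

lemma expo:
  fixes \<alpha> \<beta> p D :: real
  assumes "0 < \<alpha>" "0 < p" "p * \<alpha> < \<beta>" "0 \<le> D"
  defines "e \<equiv> (\<alpha> / (p * \<alpha> + D)) * ((\<beta> / (p * \<alpha>) - 1) / (1 + (\<beta> / (p * \<alpha>) - 1)))"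
    and "a \<equiv> (p*\<alpha>) / ((p*\<alpha> + D) * \<beta>)" and "b \<equiv> (\<beta> - p*\<alpha>) / (\<beta> * (p*\<alpha> + D))"
  shows "b * (\<alpha>*p) = p * e" "1 - a * (\<alpha>*p) - (a + b) * D = p * e" "a * (\<beta> - \<alpha>*p) = p * e"
    "0 < a" "0 < b" "0 < e"
proof -
  have P: "0 < p * \<alpha>" using assms by simp
  have B: "0 < \<beta>" using assms P by linarith
  have PD: "0 < p * \<alpha> + D" using P assms by linarith
  have e': "e = \<alpha> * (\<beta> - p*\<alpha>) / (\<beta> * (p*\<alpha> + D))"
  proof -
    have t: "(\<beta>/(p*\<alpha>) - 1) / (1 + (\<beta>/(p*\<alpha>) - 1)) = (\<beta> - p*\<alpha>)/\<beta>"
      using P B assms(1,2) by (simp add: field_simps)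
    show ?thesis unfolding e_def t by (simp add: mult.commute)
  qed
  show "b * (\<alpha>*p) = p * e" unfolding e' b_def using P B PD by (simp add: field_simps)
  show "a * (\<beta> - \<alpha>*p) = p * e" unfolding e' a_def using P B PD by (simp add: field_simps)
  have hd: "D * \<beta> + \<alpha> * (\<beta> * p) > 0" using mult_pos_pos[OF B PD] by (simp add: algebra_simps)
  have hd2: "(p*\<alpha> + D) * \<beta> \<noteq> 0" "\<beta> * (p*\<alpha> + D) \<noteq> 0" using B PD by auto
  show "1 - a * (\<alpha>*p) - (a + b) * D = p * e" unfolding e' a_def b_def using hd hd2
    by (simp add: divide_simps) (simp add: algebra_simps)
  show "0 < a" unfolding a_def using P B PD by simp
  show "0 < b" unfolding b_def using P B PD assms by simp
  show "0 < e" unfolding e' using P B PD assms by simp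
qed

lemma eps_bound:
  fixes M :: "'a::euclidean_space measure" and W :: "'a \<Rightarrow> 'a \<Rightarrow> real"
  assumes M: "prob_space M" and Mb: "sets M = sets borel" and G: "graphon M W"
    and H: "\<forall>x x' y. \<bar>W x y - W x' y\<bar> \<le> C * infnorm (x - x') powr \<alpha>"
    and C: "0 \<le> C" and \<alpha>: "0 < \<alpha>" and p: "1 \<le> p" and pb: "p * \<alpha> < \<beta>"
    and mom: "(\<integral>\<^sup>+ x. ennreal (infnorm x powr \<beta>) \<partial>M) \<le> ennreal mb" and mb: "0 \<le> mb"
    and \<kappa>: "0 < \<kappa>" "\<kappa> \<le> 1/2"
  shows "eps_block p \<kappa> M W \<le> ennreal ((2 powr p * C powr p * 2 * (1 + 3 powr (\<alpha>*p) * 5 powr real DIM('a) + 3 powr (\<alpha>*p) * mb)) powr (1/p)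
     * \<kappa> powr ((\<alpha> / (p * \<alpha> + DIM('a))) * ((\<beta> / (p * \<alpha>) - 1) / (1 + (\<beta> / (p * \<alpha>) - 1)))))"
proof -
  interpret prob_space M by fact
  define d where "d = real DIM('a)"
  define s where "s = \<alpha> * p"
  define e where "e = (\<alpha> / (p * \<alpha> + d)) * ((\<beta> / (p * \<alpha>) - 1) / (1 + (\<beta> / (p * \<alpha>) - 1)))"
  define a where "a = (p*\<alpha>) / ((p*\<alpha> + d) * \<beta>)"
  define b where "b = (\<beta> - p*\<alpha>) / (\<beta> * (p*\<alpha> + d))"
  have p0: "0 < p" using p by simp
  have d0: "0 \<le> d" by (simp add: d_def)
  note ex = expo[OF \<alpha> p0 pb d0, folded e_def a_def b_def]
  have s0: "0 < s" using \<alpha> p by (simp add: s_def)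
  have sb: "s < \<beta>" using pb by (simp add: s_def mult.commute)
  define R where "R = \<kappa> powr (-a)"
  define h where "h = \<kappa> powr b"
  have \<kappa>1: "\<kappa> \<le> 1" using \<kappa> by simp
  have h0: "0 < h" using \<kappa> by (simp add: h_def)
  have h1: "h \<le> 1" unfolding h_def using powr_mono'[of 0 b \<kappa>] ex(5) \<kappa> \<kappa>1 by simp
  have R1: "1 \<le> R" unfolding R_def using powr_mono'[of "-a" 0 \<kappa>] ex(4) \<kappa> \<kappa>1 by simp
  have hR: "h \<le> R" using h1 R1 by simp
  have R0: "0 < R" using R1 by simp
  obtain k :: nat and f :: "'a \<Rightarrow> nat" and r :: "nat \<Rightarrow> 'a" where k: "1 \<le> k" and f: "f \<in> M \<rightarrow>\<^sub>M count_space {..<k}"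
    and mass: "\<forall>i<k. \<kappa> \<le> measure M (f -` {i} \<inter> space M)"
    and Q: "(\<integral>\<^sup>+ x. ennreal (infnorm (x - r (f x)) powr s) \<partial>M)
        \<le> ennreal (h powr s) + ennreal ((3*R) powr s * (real (card {-\<lceil>R/h\<rceil>..\<lceil>R/h\<rceil>} ^ DIM('a)) * \<kappa>))
          + (\<integral>\<^sup>+ x. ennreal (indicator {x. R < infnorm x} x * (3 * infnorm x) powr s) \<partial>M)"
    using quantization[OF M Mb \<kappa>(1) \<kappa>1 h0 hR s0] by blast
  have E: "eps_block p \<kappa> M W \<le> enn_root p (ennreal (2 powr p * C powr p * 2)
           * (\<integral>\<^sup>+ x. ennreal (infnorm (x - r (f x)) powr s) \<partial>M))"
    using eps_from_partition[OF M Mb G H C p k f mass, of r] by (simp add: s_def)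
  have bm: "(\<lambda>x. ennreal (infnorm x powr \<beta>)) \<in> borel_measurable M"
  proof -
    have "(\<lambda>x. infnorm x powr \<beta>) \<in> borel_measurable borel" by measurable
    then show ?thesis by (simp add: measurable_cong_sets[OF Mb refl])
  qed
  define cT where "cT = 3 powr s * R powr (s - \<beta>)"
  have cT0: "0 \<le> cT" by (simp add: cT_def)
  have Tb: "(\<integral>\<^sup>+ x. ennreal (indicator {x. R < infnorm x} x * (3 * infnorm x) powr s) \<partial>M) \<le> ennreal (cT * mb)"
  proof -
    have pt: "indicator {x. R < infnorm x} x * (3 * infnorm x) powr s \<le> cT * infnorm x powr \<beta>" for x :: 'a
    proof (cases "R < infnorm x")
      case True
      have xp: "0 < infnorm x" using True R0 by linarith
      have "(3 * infnorm x) powr s = 3 powr s * (infnorm x powr (s - \<beta>) * infnorm x powr \<beta>)"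
        using xp by (simp add: powr_mult powr_add[symmetric])
      also have "infnorm x powr (s - \<beta>) \<le> R powr (s - \<beta>)"
        using sb R0 True by (intro powr_mono2') auto
      hence "3 powr s * (infnorm x powr (s - \<beta>) * infnorm x powr \<beta>) \<le> 3 powr s * (R powr (s - \<beta>) * infnorm x powr \<beta>)"
        by (intro mult_left_mono mult_right_mono) auto
      finally show ?thesis using True by (simp add: cT_def mult.assoc)
    next
      case False
      then show ?thesis using cT0 by simp
    qed
    have "(\<integral>\<^sup>+ x. ennreal (indicator {x. R < infnorm x} x * (3 * infnorm x) powr s) \<partial>M)
        \<le> (\<integral>\<^sup>+ x. ennreal cT * ennreal (infnorm x powr \<beta>) \<partial>M)"
      using pt cT0 by (intro nn_integral_mono) (simp add: ennreal_mult[symmetric] ennreal_leI)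
    also have "\<dots> = ennreal cT * (\<integral>\<^sup>+ x. ennreal (infnorm x powr \<beta>) \<partial>M)"
      using bm by (rule nn_integral_cmult)
    also have "\<dots> \<le> ennreal cT * ennreal mb" using mom by (rule mult_left_mono) simp
    also have "\<dots> = ennreal (cT * mb)" using cT0 mb by (simp add: ennreal_mult)
    finally show ?thesis .
  qed
  have Nb: "real (card {-\<lceil>R/h\<rceil>..\<lceil>R/h\<rceil>} ^ DIM('a)) \<le> 5 powr d * (R/h) powr d"
  proof -
    define m where "m = \<lceil>R/h\<rceil>"
    have Rh: "1 \<le> R/h" using hR h0 by simp
    have m1: "1 \<le> m" using Rh by (simp add: m_def)
    have "real (card {-m..m}) = 2 * real_of_int m + 1" using m1 by simp
    also have "\<dots> \<le> 5 * (R/h)" using Rh by (simp add: m_def) linarith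
    finally have c5: "real (card {-m..m}) \<le> 5 * (R/h)" .
    have "real (card {-m..m} ^ DIM('a)) = real (card {-m..m}) ^ DIM('a)" by simp
    also have "\<dots> \<le> (5 * (R/h)) ^ DIM('a)" using c5 by (intro power_mono) auto
    also have "\<dots> = (5 * (R/h)) powr d" using Rh by (simp add: d_def powr_realpow)
    also have "\<dots> = 5 powr d * (R/h) powr d" by (rule powr_mult)
    finally show ?thesis by (simp add: m_def)
  qed
  define K2 where "K2 = 1 + 3 powr (\<alpha>*p) * 5 powr d + 3 powr (\<alpha>*p) * mb"
  have hs: "h powr s = \<kappa> powr (p*e)" unfolding h_def s_def powr_powr ex(1) by (rule refl)
  have Rs: "R powr s * (R/h) powr d * \<kappa> = \<kappa> powr (p*e)"
  proof -
    have "R powr s = \<kappa> powr (- a * s)" unfolding R_def using \<kappa> by (simp add: powr_powr)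
    moreover have "(R/h) powr d = \<kappa> powr ((- a - b) * d)" unfolding R_def h_def using \<kappa>
      by (simp add: powr_diff[symmetric] powr_powr)
    moreover have "\<kappa> = \<kappa> powr 1" using \<kappa> by simp
    ultimately have "R powr s * (R/h) powr d * \<kappa> = \<kappa> powr (- a * s + (- a - b) * d + 1)"
      by (metis powr_add)
    also have "- a * s + (- a - b) * d + 1 = p * e" using ex(2) by (simp add: s_def algebra_simps)
    finally show ?thesis .
  qed
  have Rsb: "R powr (s - \<beta>) = \<kappa> powr (p*e)"
  proof -
    have "R powr (s - \<beta>) = \<kappa> powr (- a * (s - \<beta>))" unfolding R_def using \<kappa> by (simp add: powr_powr)
    also have "- a * (s - \<beta>) = p*e" using ex(3) by (simp add: s_def algebra_simps)
    finally show ?thesis .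
  qed
  have X: "(3*R) powr s * (real (card {-\<lceil>R/h\<rceil>..\<lceil>R/h\<rceil>} ^ DIM('a)) * \<kappa>)
      \<le> 3 powr s * 5 powr d * \<kappa> powr (p*e)"
  proof -
    have "(3*R) powr s * (real (card {-\<lceil>R/h\<rceil>..\<lceil>R/h\<rceil>} ^ DIM('a)) * \<kappa>)
        \<le> (3*R) powr s * ((5 powr d * (R/h) powr d) * \<kappa>)"
      using Nb \<kappa> by (intro mult_left_mono mult_right_mono) auto
    also have "\<dots> = 3 powr s * 5 powr d * (R powr s * (R/h) powr d * \<kappa>)"
      using R0 by (simp add: powr_mult algebra_simps)
    finally show ?thesis using Rs by simp
  qed
  have tot: "(\<integral>\<^sup>+ x. ennreal (infnorm (x - r (f x)) powr s) \<partial>M) \<le> ennreal (K2 * \<kappa> powr (p*e))"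
  proof -
    have "(\<integral>\<^sup>+ x. ennreal (infnorm (x - r (f x)) powr s) \<partial>M)
        \<le> ennreal (h powr s) + ennreal (3 powr s * 5 powr d * \<kappa> powr (p*e)) + ennreal (cT * mb)"
      using Q X Tb by (meson add_mono ennreal_leI order_refl order_trans)
    also have "\<dots> = ennreal (K2 * \<kappa> powr (p*e))"
    proof -
      have "cT * mb = 3 powr s * mb * \<kappa> powr (p*e)" using Rsb by (simp add: cT_def)
      hence "h powr s + 3 powr s * 5 powr d * \<kappa> powr (p*e) + cT * mb = K2 * \<kappa> powr (p*e)"
        using hs by (simp add: K2_def s_def algebra_simps)
      moreover have "ennreal (h powr s) + ennreal (3 powr s * 5 powr d * \<kappa> powr (p*e)) + ennreal (cT * mb)
          = ennreal (h powr s + 3 powr s * 5 powr d * \<kappa> powr (p*e) + cT * mb)"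
        using cT0 mb by (simp add: ennreal_plus)
      ultimately show ?thesis by simp
    qed
    finally show ?thesis .
  qed
  define c2 where "c2 = 2 powr p * C powr p * 2"
  have c20: "0 \<le> c2" by (simp add: c2_def)
  have K20: "0 \<le> K2" using mb by (simp add: K2_def)
  have "eps_block p \<kappa> M W \<le> enn_root p (ennreal (c2 * (K2 * \<kappa> powr (p*e))))"
  proof -
    have "ennreal c2 * (\<integral>\<^sup>+ x. ennreal (infnorm (x - r (f x)) powr s) \<partial>M) \<le> ennreal c2 * ennreal (K2 * \<kappa> powr (p*e))"
      using tot by (rule mult_left_mono) simp
    also have "\<dots> = ennreal (c2 * (K2 * \<kappa> powr (p*e)))" using c20 K20 by (simp add: ennreal_mult)
    finally have "enn_root p (ennreal c2 * (\<integral>\<^sup>+ x. ennreal (infnorm (x - r (f x)) powr s) \<partial>M))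
        \<le> enn_root p (ennreal (c2 * (K2 * \<kappa> powr (p*e))))" using p0 by (rule enn_root_mono)
    then show ?thesis using E by (simp add: c2_def)
  qed
  also have "\<dots> = ennreal ((c2 * (K2 * \<kappa> powr (p*e))) powr (1/p))"
    using c20 K20 by (simp add: enn_root_ennreal)
  also have "(c2 * (K2 * \<kappa> powr (p*e))) powr (1/p) = (c2 * K2) powr (1/p) * \<kappa> powr e"
    using c20 K20 \<kappa> p0 by (simp add: powr_mult powr_powr mult.assoc)
  finally show ?thesis by (simp add: c2_def K2_def d_def e_def)
qed

theorem proposition6p3:
  fixes M :: "'a::euclidean_space measure" and \<alpha> \<beta> C p :: real
  assumes "prob_space M" and "sets M = sets borel"
    and "0 < \<alpha>" and "\<alpha> \<le> 1" and "\<beta> \<ge> \<alpha>"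
    and "(\<integral>\<^sup>+ x. ennreal (infnorm x powr \<beta>) \<partial>M) < \<infinity>"
    and "1 \<le> p" and "p < \<beta> / \<alpha>"
  shows "\<exists>K. \<forall>W. graphon M W
      \<and> (\<integral>\<^sup>+ z. ennreal \<bar>W (fst z) (snd z)\<bar> \<partial>(M \<Otimes>\<^sub>M M)) = 1
      \<and> (\<forall>x x' y. \<bar>W x y - W x' y\<bar> \<le> C * infnorm (x - x') powr \<alpha>)
      \<longrightarrow> (\<forall>\<kappa>. 0 < \<kappa> \<and> \<kappa> \<le> 1/2 \<longrightarrow>
             eps_block p \<kappa> M W
               \<le> ennreal (K * \<kappa> powr ((\<alpha> / (p * \<alpha> + DIM('a)))
                    * ((\<beta> / (p * \<alpha>) - 1) / (1 + (\<beta> / (p * \<alpha>) - 1))))))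
        \<and> (\<forall>\<rho>>0. graphon_tail p \<rho> M W \<le> ennreal (K * \<rho> powr (\<beta> / (p * \<alpha>) - 1)))"
proof -
  note M = assms(1) and Mb = assms(2) and \<alpha> = assms(3) and \<alpha>1 = assms(4) and \<alpha>\<beta> = assms(5)
    and fin = assms(6) and p = assms(7) and pq = assms(8)
  interpret prob_space M by fact
  define C' where "C' = max C 0"
  have C'0: "0 \<le> C'" by (simp add: C'_def)
  define mb where "mb = enn2real (\<integral>\<^sup>+ x. ennreal (infnorm x powr \<beta>) \<partial>M)"
  have mb0: "0 \<le> mb" by (simp add: mb_def)
  have mbE: "(\<integral>\<^sup>+ x. ennreal (infnorm x powr \<beta>) \<partial>M) = ennreal mb"
    using fin unfolding mb_def by (simp add: ennreal_enn2real less_top)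
  have mom: "(\<integral>\<^sup>+ x. ennreal (infnorm x powr \<beta>) \<partial>M) \<le> ennreal mb" using mbE by simp
  have pb: "p * \<alpha> < \<beta>" using pq \<alpha> by (simp add: field_simps)
  define A where "A = 1 + mb"
  have A0: "0 \<le> A" using mb0 by (simp add: A_def)
  have bm: "(\<lambda>x. ennreal (infnorm x powr \<beta>)) \<in> borel_measurable M"
  proof -
    have "(\<lambda>x. infnorm x powr \<beta>) \<in> borel_measurable borel" by measurable
    then show ?thesis by (simp add: measurable_cong_sets[OF Mb refl])
  qed
  have Aint: "(\<integral>\<^sup>+ x. ennreal (infnorm x powr \<alpha>) \<partial>M) \<le> ennreal A"
  proof -
    have "(\<integral>\<^sup>+ x. ennreal (infnorm x powr \<alpha>) \<partial>M) \<le> (\<integral>\<^sup>+ x. 1 + ennreal (infnorm x powr \<beta>) \<partial>M)"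
    proof (rule nn_integral_mono)
      fix x :: 'a
      have "infnorm x powr \<alpha> \<le> 1 + infnorm x powr \<beta>"
        using \<alpha> \<alpha>\<beta> by (intro powr_le_1_plus) (auto simp: infnorm_pos_le)
      hence "ennreal (infnorm x powr \<alpha>) \<le> ennreal (1 + infnorm x powr \<beta>)" by (rule ennreal_leI)
      then show "ennreal (infnorm x powr \<alpha>) \<le> 1 + ennreal (infnorm x powr \<beta>)"
        by (simp add: ennreal_plus)
    qed
    also have "\<dots> = (\<integral>\<^sup>+ x. 1 \<partial>M) + (\<integral>\<^sup>+ x. ennreal (infnorm x powr \<beta>) \<partial>M)"
      by (rule nn_integral_add) (use bm in auto)
    also have "\<dots> = ennreal A" using mbE mb0 by (simp add: emeasure_space_1 A_def ennreal_plus)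
    finally show ?thesis .
  qed
  define c0 where "c0 = 1 + 2 * C' * A"
  have c00: "0 \<le> c0" using C'0 A0 by (simp add: c0_def)
  define Kt where "Kt = (3 powr (\<beta>/\<alpha>) * (c0 powr (\<beta>/\<alpha>) + 2 * C' powr (\<beta>/\<alpha>) * mb)) powr (1/p)"
  define Ke where "Ke = (2 powr p * C' powr p * 2 * (1 + 3 powr (\<alpha>*p) * 5 powr real DIM('a) + 3 powr (\<alpha>*p) * mb)) powr (1/p)"
  define K where "K = max Kt Ke"
  show ?thesis
  proof (rule exI[of _ K], intro allI impI)
    fix W :: "'a \<Rightarrow> 'a \<Rightarrow> real"
    assume asm: "graphon M W
      \<and> (\<integral>\<^sup>+ z. ennreal \<bar>W (fst z) (snd z)\<bar> \<partial>(M \<Otimes>\<^sub>M M)) = 1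
      \<and> (\<forall>x x' y. \<bar>W x y - W x' y\<bar> \<le> C * infnorm (x - x') powr \<alpha>)"
    hence G: "graphon M W" and N1: "(\<integral>\<^sup>+ z. ennreal \<bar>W (fst z) (snd z)\<bar> \<partial>(M \<Otimes>\<^sub>M M)) = 1"
      and H0: "\<forall>x x' y. \<bar>W x y - W x' y\<bar> \<le> C * infnorm (x - x') powr \<alpha>" by auto
    have H: "\<forall>x x' y. \<bar>W x y - W x' y\<bar> \<le> C' * infnorm (x - x') powr \<alpha>"
    proof (intro allI)
      fix x x' y :: 'a
      have "C * infnorm (x - x') powr \<alpha> \<le> C' * infnorm (x - x') powr \<alpha>"
        by (intro mult_right_mono) (auto simp: C'_def)
      then show "\<bar>W x y - W x' y\<bar> \<le> C' * infnorm (x - x') powr \<alpha>" using H0 by (meson order_trans)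
    qed
    show "(\<forall>\<kappa>. 0 < \<kappa> \<and> \<kappa> \<le> 1/2 \<longrightarrow>
             eps_block p \<kappa> M W
               \<le> ennreal (K * \<kappa> powr ((\<alpha> / (p * \<alpha> + DIM('a)))
                    * ((\<beta> / (p * \<alpha>) - 1) / (1 + (\<beta> / (p * \<alpha>) - 1))))))
        \<and> (\<forall>\<rho>>0. graphon_tail p \<rho> M W \<le> ennreal (K * \<rho> powr (\<beta> / (p * \<alpha>) - 1)))"
    proof (intro conjI allI impI)
      fix \<kappa> :: real assume \<kappa>: "0 < \<kappa> \<and> \<kappa> \<le> 1/2"
      have "eps_block p \<kappa> M W \<le> ennreal (Ke * \<kappa> powr ((\<alpha> / (p * \<alpha> + DIM('a)))
                    * ((\<beta> / (p * \<alpha>) - 1) / (1 + (\<beta> / (p * \<alpha>) - 1)))))"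
        unfolding Ke_def using eps_bound[OF M Mb G H C'0 \<alpha> p pb mom mb0] \<kappa> by blast
      also have "\<dots> \<le> ennreal (K * \<kappa> powr ((\<alpha> / (p * \<alpha> + DIM('a)))
                    * ((\<beta> / (p * \<alpha>) - 1) / (1 + (\<beta> / (p * \<alpha>) - 1)))))"
        by (intro ennreal_leI mult_right_mono) (auto simp: K_def)
      finally show "eps_block p \<kappa> M W \<le> ennreal (K * \<kappa> powr ((\<alpha> / (p * \<alpha> + DIM('a)))
                    * ((\<beta> / (p * \<alpha>) - 1) / (1 + (\<beta> / (p * \<alpha>) - 1)))))" .
    next
      fix \<rho> :: real assume \<rho>: "\<rho> > 0"
      have Wb: "\<And>x y. W x y \<le> c0 + C' * infnorm x powr \<alpha> + C' * infnorm y powr \<alpha>"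
      proof -
        fix x y :: 'a
        have "W x y \<le> 1 + C' * (infnorm x powr \<alpha> + A) + C' * (infnorm y powr \<alpha> + A)"
          by (rule W_bound[OF M Mb G N1 H C'0 \<alpha> \<alpha>1 Aint A0])
        then show "W x y \<le> c0 + C' * infnorm x powr \<alpha> + C' * infnorm y powr \<alpha>"
          by (simp add: c0_def algebra_simps)
      qed
      have "graphon_tail p \<rho> M W \<le> ennreal (Kt * \<rho> powr (\<beta> / (p * \<alpha>) - 1))"
        unfolding Kt_def by (rule tail_bound[OF M Mb G Wb C'0 c00 \<alpha> p pq mom mb0 \<rho>])
      also have "\<dots> \<le> ennreal (K * \<rho> powr (\<beta> / (p * \<alpha>) - 1))"
        by (intro ennreal_leI mult_right_mono) (auto simp: K_def)
      finally show "graphon_tail p \<rho> M W \<le> ennreal (K * \<rho> powr (\<beta> / (p * \<alpha>) - 1))" .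
    qed
  qed
qed

end
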